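(* For $m>0$ and $n\ge 2$, the sparing number of the $(m,n)$-cone $C_{m,n}$ is $m$.
   Context: An $(m,n)$-cone $C_{m,n}$ is the graph whose vertex set is partitioned into sets $U$ and $S$, where the vertices of $U$ induce a cycle $C_m$, $S$ is an independent set with $|S|=n$, and every vertex of $S$ is adjacent to every vertex of $U$; i.e. $C_{m,n}=C_m+S$ (join). Let $\mathbb{N}_0$ be the set of non-negative integers; for $A,B\subseteq\mathbb{N}_0$, $A+B=\{a+b:a\in A,b\in B\}$. An integer additive set-indexer (IASI) of a graph $G$ is an injective map $f:V(G)\to\mathcal{P}(\mathbb{N}_0)$ such that $f^+:E(G)\to\mathcal{P}(\mathbb{N}_0)$, $f^+(uv)=f(u)+f(v)$, is injective. A weak IASI is an IASI with $|f^+(uv)|=\max(|f(u)|,|f(v)|)$ for every edge $uv$. An edge $e$ is mono-indexed if $|f^+(e)|=1$. The sparing number $\varphi(G)$ is the minimum number of mono-indexed edges over all weak IASIs of $G$. *)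

theory Defs
  imports Main "HOL-Library.Set_Algebras"
begin

text \<open>A graph is given by a vertex set V and a symmetric edge relation E
  (pairs (u,v) with u,v in V, u different from v).  The sumset of two sets
  of naturals is the library pointwise sum A + B (Set_Algebras).\<close>

definition iasi :: "'a set \<Rightarrow> ('a \<times> 'a) set \<Rightarrow> ('a \<Rightarrow> nat set) \<Rightarrow> bool" where
  "iasi V E f \<longleftrightarrow>
     (\<forall>v\<in>V. finite (f v) \<and> f v \<noteq> {}) \<and>
     inj_on f V \<and>
     (\<forall>(u,v)\<in>E. \<forall>(x,y)\<in>E. f u + f v = f x + f y \<longrightarrow> {u,v} = {x,y})"

definition weak_iasi :: "'a set \<Rightarrow> ('a \<times> 'a) set \<Rightarrow> ('a \<Rightarrow> nat set) \<Rightarrow> bool" where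
  "weak_iasi V E f \<longleftrightarrow> iasi V E f \<and>
     (\<forall>(u,v)\<in>E. card (f u + f v) = max (card (f u)) (card (f v)))"

definition mono_edges :: "('a \<times> 'a) set \<Rightarrow> ('a \<Rightarrow> nat set) \<Rightarrow> 'a set set" where
  "mono_edges E f = {{u,v} | u v. (u,v) \<in> E \<and> card (f u + f v) = 1}"

definition sparing_number :: "'a set \<Rightarrow> ('a \<times> 'a) set \<Rightarrow> nat" where
  "sparing_number V E = (LEAST k. \<exists>f. weak_iasi V E f \<and> card (mono_edges E f) = k)"

text \<open>The (m,n)-cone: cycle vertices Inl i (i < m), independent vertices Inr j (j < n).\<close>
definition cone_V :: "nat \<Rightarrow> nat \<Rightarrow> (nat + nat) set" where
  "cone_V m n = Inl ` {..<m} \<union> Inr ` {..<n}"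

definition cone_E :: "nat \<Rightarrow> nat \<Rightarrow> ((nat + nat) \<times> (nat + nat)) set" where
  "cone_E m n =
     {(Inl i, Inl j) | i j. i < m \<and> j < m \<and> (j = (i + 1) mod m \<or> i = (j + 1) mod m)}
   \<union> {(Inl i, Inr j) | i j. i < m \<and> j < n}
   \<union> {(Inr j, Inl i) | i j. i < m \<and> j < n}"

end

theory Submission
  imports Defs
begin

lemma sing_plus: "{a::nat} + B = (\<lambda>b. a + b) ` B"
  by (auto simp: set_plus_def)

lemma card_le_plus:
  fixes A B :: "nat set"
  assumes "finite A" "finite B" "B \<noteq> {}"
  shows "card A \<le> card (A + B)"
proof -
  obtain b where b: "b \<in> B" using assms by auto
  have "(\<lambda>a. a + b) ` A \<subseteq> A + B" using b by (auto simp: set_plus_def)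
  moreover have "card ((\<lambda>a. a + b) ` A) = card A" by (simp add: card_image inj_on_def)
  ultimately show ?thesis using finite_set_plus[OF assms(1,2)] by (metis card_mono)
qed

lemma card_lt_plus:
  fixes A B :: "nat set"
  assumes "finite A" "A \<noteq> {}" "finite B" "card B \<ge> 2"
  shows "card A < card (A + B)"
proof -
  have Bne: "B \<noteq> {}" using assms by auto
  define b1 where "b1 = Max B"
  define b0 where "b0 = Min B"
  have b1: "b1 \<in> B" using assms Bne by (simp add: b1_def)
  have b0: "b0 \<in> B" using assms Bne by (simp add: b0_def)
  have "b0 \<noteq> b1"
  proof
    assume "b0 = b1"
    then have "\<forall>x\<in>B. x = b0" using assms Bne b0_def b1_def
      by (metis Max_ge Min_le order_antisym)
    then have "B \<subseteq> {b0}" by auto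
    then have "card B \<le> card {b0}" by (intro card_mono) auto
    then have "card B \<le> 1" by simp
    then show False using assms by simp
  qed
  then have lt: "b0 < b1" using assms Bne b0_def b1_def by (metis Min_le b1 order_le_neq_trans)
  define a0 where "a0 = Min A"
  have a0: "a0 \<in> A" using assms by (simp add: a0_def)
  have sub: "insert (a0 + b0) ((\<lambda>a. a + b1) ` A) \<subseteq> A + B" using b1 b0 a0 by (auto simp: set_plus_def)
  have nin: "a0 + b0 \<notin> (\<lambda>a. a + b1) ` A"
  proof
    assume "a0 + b0 \<in> (\<lambda>a. a + b1) ` A"
    then obtain a where "a \<in> A" "a0 + b0 = a + b1" by auto
    moreover have "a0 \<le> a" using \<open>a \<in> A\<close> assms a0_def by simp
    ultimately show False using lt by simp
  qed
  have "card (insert (a0 + b0) ((\<lambda>a. a + b1) ` A)) = card A + 1"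
    using nin assms by (simp add: card_image inj_on_def)
  then show ?thesis using card_mono[OF finite_set_plus[OF assms(1,3)] sub] by simp
qed

lemma pow2_pair:
  fixes i j k l :: nat
  assumes "i < j" "k < l" "2^i + 2^j = (2::nat)^k + 2^l"
  shows "i = k \<and> j = l"
  using assms
proof (induction i arbitrary: j k l)
  case 0
  note h = "0.prems"
  have "odd ((2::nat)^0 + 2^j)" using h(1) by simp
  then have "odd ((2::nat)^k + 2^l)" using h(3) by metis
  have "k = 0"
  proof (rule ccontr)
    assume "k \<noteq> 0"
    then have e1: "even ((2::nat)^k)" by simp
    have e2: "even ((2::nat)^l)" using h(2) by simp
    have "even ((2::nat)^k + 2^l)" using e1 e2 by (rule dvd_add)
    then show False using \<open>odd ((2::nat)^k + 2^l)\<close> by blast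
  qed
  then show ?case using h by simp
next
  case (Suc i)
  obtain j' where j: "j = Suc j'" using Suc by (cases j) auto
  have "(2::nat)^(Suc i) + 2^j = 2*(2^i + 2^j')" using j by simp
  then have "even ((2::nat)^(Suc i) + 2^j)" by (metis dvd_triv_left)
  then have ev: "even ((2::nat)^k + 2^l)" using Suc.prems(3) by metis
  have "k \<noteq> 0"
  proof
    assume "k = 0"
    then have "(2::nat)^k + 2^l = 1 + 2 * 2^(l - 1)" using Suc.prems(2)
      by (metis One_nat_def Suc_pred power_0 power_Suc)
    then show False using ev by (metis dvd_triv_left even_add odd_one)
  qed
  then obtain k' where k: "k = Suc k'" by (cases k) auto
  obtain l' where l: "l = Suc l'" using Suc.prems k by (cases l) auto
  have "2^i + 2^j' = (2::nat)^k' + 2^l'" using Suc.prems(3) j k l by simp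
  then show ?case using Suc.IH[of j' k' l'] Suc.prems j k l by simp
qed

lemma cyc_inj:
  assumes "3 \<le> (m::nat)" "i < m" "j < m"
    "{i, (i+1) mod m} = {j, (j+1) mod m}"
  shows "i = j"
proof (rule ccontr)
  assume ne: "i \<noteq> j"
  then have a: "i = (j+1) mod m" and b: "j = (i+1) mod m" using assms(4) by (auto simp: doubleton_eq_iff)
  show False
  proof (cases "j + 1 < m")
    case True
    then have "i = j + 1" using a by simp
    then show ?thesis using b assms
      by (cases "j + 2 < m") (auto simp: mod_if split: if_splits)
  next
    case False
    then have "j + 1 = m" using assms by simp
    then have "i = 0" using a by simp
    then show ?thesis using b assms \<open>j+1 = m\<close> by simp
  qed
qed


lemma pow2_pair':
  fixes i j k l :: nat
  assumes "i \<noteq> j" "k \<noteq> l" "2^i + 2^j = (2::nat)^k + 2^l"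
  shows "{i, j} = {k, l}"
proof -
  have c: "\<And>a b c d. a < b \<Longrightarrow> c < d \<Longrightarrow> (2::nat)^a + 2^b = 2^c + 2^d \<Longrightarrow> {a,b} = {c,d}"
    using pow2_pair by blast
  show ?thesis
  proof (cases "i < j")
    case True
    then show ?thesis
    proof (cases "k < l")
      case True then show ?thesis using c[of i j k l] \<open>i<j\<close> assms by simp
    next
      case False then have "l < k" using assms by simp
      then show ?thesis using c[of i j l k] \<open>i<j\<close> assms by (simp add: add.commute insert_commute)
    qed
  next
    case False then have ji: "j < i" using assms by simp
    then show ?thesis
    proof (cases "k < l")
      case True then show ?thesis using c[of j i k l] ji assms by (simp add: add.commute insert_commute)
    next
      case False then have "l < k" using assms by simp
      then show ?thesis using c[of j i l k] ji assms by (simp add: add.commute insert_commute)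
    qed
  qed
qed

lemma cyc_ne:
  assumes "3 \<le> (m::nat)" "i < m"
  shows "i \<noteq> (i + 1) mod m"
proof (cases "i + 1 < m")
  case True then show ?thesis by simp
next
  case False then have "i + 1 = m" using assms by simp
  then show ?thesis using assms by simp
qed

lemma inl_pair_eq: "({Inl a, Inl b} = ({Inl c, Inl d} :: ('a + 'b) set)) \<longleftrightarrow> {a, b} = {c, d}"
  by (auto simp: doubleton_eq_iff)

lemma cyc_inj_on:
  assumes "3 \<le> (m::nat)"
  shows "inj_on (\<lambda>i. {Inl i, Inl ((i+1) mod m)} :: (nat + 'b) set) {..<m}"
  unfolding inj_on_def using cyc_inj[OF assms] by (simp add: inl_pair_eq)

lemma plus_ss: "{a::nat} + {b} = {a + b}" by (auto simp: set_plus_def)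
lemma plus_sd: "{a::nat} + {0, c} = {a, a + c}" by (auto simp: set_plus_def)
lemma plus_ds: "{0, c} + {a::nat} = {a, a + c}" by (auto simp: set_plus_def)

lemma dbl_eq:
  fixes a b c d :: nat
  assumes "{a, a + Suc c} = {b, b + Suc d}"
  shows "a = b \<and> c = d"
  using assms by (auto simp: doubleton_eq_iff)

lemma finite_cone_V: "finite (cone_V m n)"
  by (simp add: cone_V_def)

lemma cone_E_sub: "cone_E m n \<subseteq> cone_V m n \<times> cone_V m n"
  by (auto simp: cone_E_def cone_V_def)

lemma finite_cone_E: "finite (cone_E m n)"
  using finite_subset[OF cone_E_sub] finite_cone_V by blast

lemma mono_finite: "finite (mono_edges (cone_E m n) f)"
proof -
  have "mono_edges (cone_E m n) f \<subseteq> (\<lambda>(u,v). {u,v}) ` cone_E m n"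
    by (auto simp: mono_edges_def)
  then show ?thesis using finite_cone_E by (metis finite_imageI finite_subset)
qed

definition lab :: "nat + nat \<Rightarrow> nat set" where
  "lab x = (case x of Inl i \<Rightarrow> {2^i} | Inr j \<Rightarrow> {0, j + 1})"

lemma lab_simps [simp]: "lab (Inl i) = {2^i}" "lab (Inr j) = {0, Suc j}"
  by (simp_all add: lab_def)

lemma lab_shape:
  assumes m: "3 \<le> m" and e: "(u, v) \<in> cone_E m n"
  shows "(\<exists>i j. u = Inl i \<and> v = Inl j \<and> i \<noteq> j \<and> lab u + lab v = {2^i + 2^j})
       \<or> (\<exists>i j. {u, v} = {Inl i, Inr j} \<and> lab u + lab v = {2^i, 2^i + Suc j})"
  using e unfolding cone_E_def
proof (elim UnE CollectE exE conjE)
  fix i j assume h: "(u, v) = (Inl i, Inl j)" "i < m" "j < m" "j = (i + 1) mod m \<or> i = (j + 1) mod m"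
  have "i \<noteq> j" using h(4) cyc_ne[OF m h(2)] cyc_ne[OF m h(3)] by auto
  then show ?thesis using h(1) by (simp add: plus_ss)
next
  fix i j assume h: "(u, v) = (Inl i, Inr j)"
  then have "{u, v} = {Inl i, Inr j}" by auto
  moreover have "lab u + lab v = {2^i, 2^i + Suc j}" using h by (simp add: plus_sd)
  ultimately show ?thesis by blast
next
  fix i j assume h: "(u, v) = (Inr j, Inl i)"
  then have "{u, v} = {Inl i, Inr j}" by auto
  moreover have "lab u + lab v = {2^i, 2^i + Suc j}" using h by (simp add: plus_ds)
  ultimately show ?thesis by blast
qed

lemma sd_ne: "{s::nat} \<noteq> {a, a + Suc c}"
proof
  assume "{s} = {a, a + Suc c}"
  then have "a = s" "a + Suc c = s" by (metis insertI1 singletonD insert_commute)+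
  then show False by simp
qed

lemma lab_edge_eq:
  assumes m: "3 \<le> m"
    and e1: "(u, v) \<in> cone_E m n" and e2: "(x, y) \<in> cone_E m n"
    and eq: "lab u + lab v = lab x + lab y"
  shows "{u, v} = {x, y}"
  using lab_shape[OF m e1] lab_shape[OF m e2]
proof (elim disjE exE conjE)
  fix i j k l
  assume h: "u = Inl i" "v = Inl j" "i \<noteq> j" "lab u + lab v = {2 ^ i + 2 ^ j}"
    "x = Inl k" "y = Inl l" "k \<noteq> l" "lab x + lab y = {2 ^ k + 2 ^ l}"
  have "2^i + 2^j = (2::nat)^k + 2^l" using h eq by simp
  then have "{i,j} = {k,l}" using h(3,7) pow2_pair' by blast
  then show ?thesis using h by (simp add: inl_pair_eq)
next
  fix i j k l
  assume h: "lab u + lab v = {2 ^ i + 2 ^ j}" "lab x + lab y = {2 ^ k, 2 ^ k + Suc l}"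
  then show ?thesis using eq sd_ne by metis
next
  fix i j k l
  assume h: "lab u + lab v = {2 ^ i, 2 ^ i + Suc j}" "lab x + lab y = {2 ^ k + 2 ^ l}"
  then show ?thesis using eq sd_ne by metis
next
  fix i j k l
  assume h: "{u, v} = {Inl i, Inr j}" "lab u + lab v = {2 ^ i, 2 ^ i + Suc j}"
    "{x, y} = {Inl k, Inr l}" "lab x + lab y = {2 ^ k, 2 ^ k + Suc l}"
  have "{2^i, 2^i + Suc j} = {(2::nat)^k, 2^k + Suc l}" using h eq by simp
  then have "(2::nat)^i = 2^k \<and> j = l" by (rule dbl_eq)
  then have "i = k" "j = l" by auto
  then show ?thesis using h by simp
qed

lemma lab_weak:
  assumes m: "3 \<le> m"
  shows "weak_iasi (cone_V m n) (cone_E m n) lab"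
proof -
  have "inj_on lab (cone_V m n)"
    by (auto simp: inj_on_def cone_V_def doubleton_eq_iff)
  moreover have "\<forall>v\<in>cone_V m n. finite (lab v) \<and> lab v \<noteq> {}"
    by (auto simp: cone_V_def)
  moreover have "\<forall>(u,v)\<in>cone_E m n. \<forall>(x,y)\<in>cone_E m n. lab u + lab v = lab x + lab y \<longrightarrow> {u,v} = {x,y}"
    using lab_edge_eq[OF m] by blast
  moreover have "\<forall>(u,v)\<in>cone_E m n. card (lab u + lab v) = max (card (lab u)) (card (lab v))"
    by (auto simp: cone_E_def plus_ss plus_sd plus_ds)
  ultimately show ?thesis by (simp add: weak_iasi_def iasi_def)
qed

lemma lab_mono:
  assumes m: "3 \<le> m"
  shows "card (mono_edges (cone_E m n) lab) = m"
proof -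
  have "mono_edges (cone_E m n) lab = (\<lambda>i. {Inl i, Inl ((i+1) mod m)}) ` {..<m}"
  proof
    show "mono_edges (cone_E m n) lab \<subseteq> (\<lambda>i. {Inl i, Inl ((i+1) mod m)}) ` {..<m}"
    proof
      fix e assume "e \<in> mono_edges (cone_E m n) lab"
      then obtain u v where e: "e = {u,v}" "(u,v) \<in> cone_E m n" "card (lab u + lab v) = 1"
        unfolding mono_edges_def by blast
      from e(2,3) show "e \<in> (\<lambda>i. {Inl i, Inl ((i+1) mod m)}) ` {..<m}"
        unfolding cone_E_def
      proof (elim UnE CollectE exE conjE)
        fix i j assume h: "(u, v) = (Inl i, Inl j)" "i < m" "j < m" "j = (i + 1) mod m \<or> i = (j + 1) mod m"
        then show ?thesis
        proof (elim disjE)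
          assume "j = (i + 1) mod m" then show ?thesis using h e(1) by auto
        next
          assume "i = (j + 1) mod m"
          then have "e = {Inl j, Inl ((j+1) mod m)}" using h e(1) by auto
          then show ?thesis using h by auto
        qed
      qed (auto simp: plus_sd plus_ds)
    qed
  next
    show "(\<lambda>i. {Inl i, Inl ((i+1) mod m)}) ` {..<m} \<subseteq> mono_edges (cone_E m n) lab"
    proof
      fix e :: "(nat + nat) set" assume "e \<in> (\<lambda>i. {Inl i, Inl ((i+1) mod m)}) ` {..<m}"
      then obtain i where i: "i < m" "e = {Inl i, Inl ((i+1) mod m)}" by auto
      have "(Inl i, Inl ((i+1) mod m)) \<in> cone_E m n" using i m by (auto simp: cone_E_def)
      moreover have "card (lab (Inl i) + lab (Inl ((i+1) mod m))) = 1" by (simp add: plus_ss)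
      ultimately show "e \<in> mono_edges (cone_E m n) lab" unfolding mono_edges_def using i by blast
    qed
  qed
  then show ?thesis using card_image[OF cyc_inj_on[OF m]] by simp
qed

lemma mod_suc_inj:
  assumes "i < (m::nat)" "j < m" "(i+1) mod m = (j+1) mod m"
  shows "i = j"
proof -
  have a: "(i+1) mod m = (if i + 1 = m then 0 else i + 1)" using assms(1) by (simp add: mod_if)
  have b: "(j+1) mod m = (if j + 1 = m then 0 else j + 1)" using assms(2) by (simp add: mod_if)
  show ?thesis using a b assms by (auto split: if_splits)
qed

lemma lower:
  assumes m: "3 \<le> m" and n: "2 \<le> n" and w: "weak_iasi (cone_V m n) (cone_E m n) f"
  shows "m \<le> card (mono_edges (cone_E m n) f)"
proof -
  let ?E = "cone_E m n" and ?V = "cone_V m n"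
  have fin: "\<And>v. v \<in> ?V \<Longrightarrow> finite (f v) \<and> f v \<noteq> {}" using w by (auto simp: weak_iasi_def iasi_def)
  have wk: "\<And>u v. (u,v) \<in> ?E \<Longrightarrow> card (f u + f v) = max (card (f u)) (card (f v))"
    using w by (auto simp: weak_iasi_def)
  have inV: "\<And>u v. (u,v) \<in> ?E \<Longrightarrow> u \<in> ?V \<and> v \<in> ?V" using cone_E_sub by blast
  have edge: "\<And>u v. (u,v) \<in> ?E \<Longrightarrow> card (f u) = 1 \<or> card (f v) = 1"
  proof (rule ccontr)
    fix u v assume e: "(u,v) \<in> ?E" and c: "\<not> (card (f u) = 1 \<or> card (f v) = 1)"
    have fu: "finite (f u)" "f u \<noteq> {}" and fv: "finite (f v)" "f v \<noteq> {}" using fin inV[OF e] by auto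
    have "card (f u) \<ge> 2" "card (f v) \<ge> 2" using c fu fv card_0_eq by fastforce+
    then have "card (f u) < card (f u + f v)" "card (f v) < card (f v + f u)"
      using card_lt_plus fu fv by auto
    then show False using wk[OF e] by (simp add: add.commute)
  qed
  have mono: "\<And>u v. (u,v) \<in> ?E \<Longrightarrow> card (f u) = 1 \<Longrightarrow> card (f v) = 1 \<Longrightarrow> {u,v} \<in> mono_edges ?E f"
  proof -
    fix u v assume e: "(u,v) \<in> ?E" and cu: "card (f u) = 1" and cv: "card (f v) = 1"
    then show "{u,v} \<in> mono_edges ?E f" using wk[OF e] unfolding mono_edges_def by auto
  qed
  have fm: "finite (mono_edges ?E f)" by (rule mono_finite)
  have cyc: "\<And>i. i < m \<Longrightarrow> (Inl i, Inl ((i+1) mod m)) \<in> ?E" using m by (auto simp: cone_E_def)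
  have lr: "\<And>i j. i < m \<Longrightarrow> j < n \<Longrightarrow> (Inl i, Inr j) \<in> ?E" by (auto simp: cone_E_def)
  show ?thesis
  proof (cases "\<exists>j<n. card (f (Inr j)) \<noteq> 1")
    case True
    then obtain j where j: "j < n" "card (f (Inr j)) \<noteq> 1" by blast
    have s: "\<And>i. i < m \<Longrightarrow> card (f (Inl i)) = 1" using edge[OF lr[OF _ j(1)]] j(2) by blast
    have "(\<lambda>i. {Inl i, Inl ((i+1) mod m)}) ` {..<m} \<subseteq> mono_edges ?E f"
      using mono[OF cyc] s by auto
    from card_inj_on_le[OF cyc_inj_on[OF m] this fm] show ?thesis by simp
  next
    case False
    then have s0: "card (f (Inr 0)) = 1" and s1: "card (f (Inr 1)) = 1" using n by auto
    define h where "h i = (if card (f (Inl i)) = 1 then {Inl i, Inr 0} else {Inl ((i+1) mod m), Inr (1::nat)})" for i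
    have "h ` {..<m} \<subseteq> mono_edges ?E f"
    proof
      fix e assume "e \<in> h ` {..<m}"
      then obtain i where i: "i < m" "e = h i" by auto
      show "e \<in> mono_edges ?E f"
      proof (cases "card (f (Inl i)) = 1")
        case True
        then show ?thesis using i mono[OF lr[of i 0] True s0] n by (simp add: h_def)
      next
        case False
        then have c: "card (f (Inl ((i+1) mod m))) = 1" using edge[OF cyc[OF i(1)]] by blast
        have "(i+1) mod m < m" using m by simp
        then show ?thesis using i False mono[OF lr[of "(i+1) mod m" 1] c s1] n by (simp add: h_def)
      qed
    qed
    moreover have "inj_on h {..<m}"
    proof (rule inj_onI)
      fix i j assume i: "i \<in> {..<m}" and j: "j \<in> {..<m}" and eq: "h i = h j"
      show "i = j"
      proof (cases "card (f (Inl i)) = 1"; cases "card (f (Inl j)) = 1")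
        assume "card (f (Inl i)) \<noteq> 1" "card (f (Inl j)) \<noteq> 1"
        then have "Inl ((i+1) mod m) \<in> h i" by (simp add: h_def)
        then have "Inl ((i+1) mod m) \<in> h j" using eq by simp
        then have "(i+1) mod m = (j+1) mod m" using \<open>card (f (Inl j)) \<noteq> 1\<close> by (simp add: h_def)
        then show "i = j" using i j mod_suc_inj by auto
      next
        assume "card (f (Inl i)) = 1" "card (f (Inl j)) = 1"
        then have "Inl i \<in> h i" by (simp add: h_def)
        then have "Inl i \<in> h j" using eq by simp
        then show "i = j" using \<open>card (f (Inl j)) = 1\<close> by (simp add: h_def)
      next
        assume "card (f (Inl i)) = 1" "card (f (Inl j)) \<noteq> 1"
        then have "Inr 0 \<in> h i" by (simp add: h_def)
        then have "Inr 0 \<in> h j" using eq by simp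
        then show "i = j" using \<open>card (f (Inl j)) \<noteq> 1\<close> by (simp add: h_def)
      next
        assume "card (f (Inl i)) \<noteq> 1" "card (f (Inl j)) = 1"
        then have "Inr 1 \<in> h i" by (simp add: h_def)
        then have "Inr 1 \<in> h j" using eq by simp
        then show "i = j" using \<open>card (f (Inl j)) = 1\<close> by (simp add: h_def)
      qed
    qed
    ultimately have "card {..<m} \<le> card (mono_edges ?E f)" using card_inj_on_le[OF _ _ fm] by blast
    then show ?thesis by simp
  qed
qed

theorem theorem2p27:
  fixes m n :: nat
  assumes "3 \<le> m" and "2 \<le> n"
  shows "sparing_number (cone_V m n) (cone_E m n) = m"
  unfolding sparing_number_def
proof (rule Least_equality)
  show "\<exists>f. weak_iasi (cone_V m n) (cone_E m n) f \<and> card (mono_edges (cone_E m n) f) = m"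
    using lab_weak[OF assms(1)] lab_mono[OF assms(1)] by blast
next
  fix k assume "\<exists>f. weak_iasi (cone_V m n) (cone_E m n) f \<and> card (mono_edges (cone_E m n) f) = k"
  then show "m \<le> k" using lower[OF assms] by blast
qed

end
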